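(* Let $m,n\ge 2$ be integers. Then $IDI(P_m\square P_n)=2$ if $(m,n)\neq(2,2)$, and $IDI(P_2\square P_2)=3$.
   Context: $P_k$ is the path on $k$ vertices and $\square$ the Cartesian product, so $P_m\square P_n$ is the $m\times n$ grid. For a finite simple connected graph $G=(V,E)$ with diameter $d$, a rank assignment is a function $f:V\to\mathbb{R}$; under $f$, the string of a vertex $v$ is the $d$-vector whose $i$-th coordinate is the sum of $f(w)$ over all vertices $w$ with $d(v,w)=i$. The ID-index $IDI(G)$ is the minimum $k$ such that there exists $f:V\to\mathbb{R}$ with $|f(V)|=k$ under which all vertices have distinct strings. *)

theory Defs
  imports Complex_Main
begin

text \<open>A finite simple graph is given by a vertex set V and a symmetric irreflexive
adjacency relation E (only its restriction to V matters).\<close>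

definition is_walk :: "'a set \<Rightarrow> ('a \<Rightarrow> 'a \<Rightarrow> bool) \<Rightarrow> 'a list \<Rightarrow> bool" where
  "is_walk V E xs \<longleftrightarrow> xs \<noteq> [] \<and> set xs \<subseteq> V \<and>
     (\<forall>i. Suc i < length xs \<longrightarrow> E (xs ! i) (xs ! Suc i))"

definition gdist :: "'a set \<Rightarrow> ('a \<Rightarrow> 'a \<Rightarrow> bool) \<Rightarrow> 'a \<Rightarrow> 'a \<Rightarrow> nat" where
  "gdist V E u v = (LEAST k. \<exists>xs. is_walk V E xs \<and> hd xs = u \<and> last xs = v \<and> length xs = Suc k)"

definition diameter :: "'a set \<Rightarrow> ('a \<Rightarrow> 'a \<Rightarrow> bool) \<Rightarrow> nat" where
  "diameter V E = Max {gdist V E u v | u v. u \<in> V \<and> v \<in> V}"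

definition vstring :: "'a set \<Rightarrow> ('a \<Rightarrow> 'a \<Rightarrow> bool) \<Rightarrow> ('a \<Rightarrow> real) \<Rightarrow> 'a \<Rightarrow> real list" where
  "vstring V E f v = map (\<lambda>i. \<Sum>w\<in>{w\<in>V. gdist V E v w = i}. f w) [1..<Suc (diameter V E)]"

definition IDI :: "'a set \<Rightarrow> ('a \<Rightarrow> 'a \<Rightarrow> bool) \<Rightarrow> nat" where
  "IDI V E = (LEAST k. \<exists>f :: 'a \<Rightarrow> real. card (f ` V) = k \<and> inj_on (vstring V E f) V)"

definition grid_V :: "nat \<Rightarrow> nat \<Rightarrow> (nat \<times> nat) set" where
  "grid_V m n = {0..<m} \<times> {0..<n}"

definition grid_E :: "(nat \<times> nat) \<Rightarrow> (nat \<times> nat) \<Rightarrow> bool" where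
  "grid_E p q \<longleftrightarrow> (fst p = fst q \<and> (snd p = Suc (snd q) \<or> snd q = Suc (snd p))) \<or>
                   (snd p = snd q \<and> (fst p = Suc (fst q) \<or> fst q = Suc (fst p)))"

end

theory Submission
  imports Defs "HOL-Library.Multiset"
begin


definition mdi :: "nat \<times> nat \<Rightarrow> nat \<times> nat \<Rightarrow> int" where
  "mdi p q = \<bar>int (fst p) - int (fst q)\<bar> + \<bar>int (snd p) - int (snd q)\<bar>"

lemma mdi_edge: "grid_E x y \<Longrightarrow> mdi x y = 1"
  unfolding grid_E_def mdi_def by auto

lemma mdi_tri: "mdi x z \<le> mdi x y + mdi y z"
  unfolding mdi_def by auto

lemma is_walk_tl: "is_walk V E (x # y # xs) \<Longrightarrow> is_walk V E (y # xs) \<and> E x y"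
  unfolding is_walk_def
proof (intro conjI allI impI)
  assume a: "x # y # xs \<noteq> [] \<and> set (x # y # xs) \<subseteq> V \<and> (\<forall>i. Suc i < length (x # y # xs) \<longrightarrow> E ((x # y # xs) ! i) ((x # y # xs) ! Suc i))"
  show "y # xs \<noteq> []" by simp
  show "set (y # xs) \<subseteq> V" using a by auto
  show "E x y" using a[THEN conjunct2, THEN conjunct2, rule_format, of 0] by simp
  fix i assume "Suc i < length (y # xs)"
  then show "E ((y # xs) ! i) ((y # xs) ! Suc i)"
    using a[THEN conjunct2, THEN conjunct2, rule_format, of "Suc i"] by simp
qed

lemma walk_lower: "is_walk V grid_E xs \<Longrightarrow> mdi (hd xs) (last xs) \<le> int (length xs) - 1"
proof (induction xs rule: induct_list012)
  case 1 then show ?case by (simp add: is_walk_def)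
next
  case (2 x) then show ?case by (simp add: mdi_def)
next
  case (3 x y zs)
  from is_walk_tl[OF "3.prems"] have w: "is_walk V grid_E (y # zs)" and e: "grid_E x y" by auto
  have "mdi x (last (y#zs)) \<le> mdi x y + mdi y (last (y # zs))" by (rule mdi_tri)
  with "3.IH"(2)[OF w] mdi_edge[OF e] show ?case by simp
qed

lemma is_walk_cons: "is_walk V E xs \<Longrightarrow> u \<in> V \<Longrightarrow> E u (hd xs) \<Longrightarrow> is_walk V E (u # xs)"
  unfolding is_walk_def
proof (intro conjI allI impI)
  assume a: "xs \<noteq> [] \<and> set xs \<subseteq> V \<and> (\<forall>i. Suc i < length xs \<longrightarrow> E (xs ! i) (xs ! Suc i))"
    and u: "u \<in> V" and e: "E u (hd xs)"
  show "u # xs \<noteq> []" by simp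
  show "set (u # xs) \<subseteq> V" using a u by auto
  fix i assume i: "Suc i < length (u # xs)"
  show "E ((u # xs) ! i) ((u # xs) ! Suc i)"
  proof (cases i)
    case 0 then show ?thesis using e a by (simp add: hd_conv_nth)
  next
    case (Suc k) then show ?thesis using a i by simp
  qed
qed

lemma walk_exists:
  "\<And>u. u \<in> grid_V m n \<Longrightarrow> v \<in> grid_V m n \<Longrightarrow> nat (mdi u v) = d \<Longrightarrow>
   \<exists>xs. is_walk (grid_V m n) grid_E xs \<and> hd xs = u \<and> last xs = v \<and> length xs = Suc d"
proof (induction d)
  case 0
  then have "u = v" unfolding mdi_def by (auto simp: prod_eq_iff)
  then show ?case using 0 by (intro exI[of _ "[u]"]) (auto simp: is_walk_def)
next
  case (Suc d)
  obtain a b where u: "u = (a, b)" by (cases u)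
  obtain c e where v: "v = (c, e)" by (cases v)
  define u' where "u' = (if a < c then (Suc a, b) else if c < a then (a - 1, b)
      else if b < e then (a, Suc b) else (a, b - 1))"
  have uV: "a < m" "b < n" and vV: "c < m" "e < n" using Suc.prems u v by (auto simp: grid_V_def)
  have ne: "u \<noteq> v" using Suc.prems(3) unfolding mdi_def by auto
  have u'V: "u' \<in> grid_V m n" using uV vV ne u v unfolding u'_def grid_V_def by auto
  have eu: "grid_E u u'" using ne u v unfolding u'_def grid_E_def by auto
  have du: "nat (mdi u' v) = d" using Suc.prems(3) ne u v unfolding u'_def mdi_def by auto
  obtain xs where xs: "is_walk (grid_V m n) grid_E xs" "hd xs = u'" "last xs = v" "length xs = Suc d"
    using Suc.IH[OF u'V Suc.prems(2) du] by blast
  have "xs \<noteq> []" using xs(4) by auto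
  then show ?case using xs Suc.prems(1) eu
    by (intro exI[of _ "u # xs"]) (auto intro!: is_walk_cons)
qed

lemma gdist_grid:
  assumes "u \<in> grid_V m n" "v \<in> grid_V m n"
  shows "gdist (grid_V m n) grid_E u v = nat (mdi u v)"
  unfolding gdist_def
proof (rule Least_equality)
  show "\<exists>xs. is_walk (grid_V m n) grid_E xs \<and> hd xs = u \<and> last xs = v \<and> length xs = Suc (nat (mdi u v))"
    using walk_exists[OF assms refl] .
next
  fix k assume "\<exists>xs. is_walk (grid_V m n) grid_E xs \<and> hd xs = u \<and> last xs = v \<and> length xs = Suc k"
  then obtain xs where "is_walk (grid_V m n) grid_E xs" "hd xs = u" "last xs = v" "length xs = Suc k" by blast
  with walk_lower[of "grid_V m n" xs] show "nat (mdi u v) \<le> k" by simp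
qed


definition sig :: "'a set \<Rightarrow> ('a \<Rightarrow> 'a \<Rightarrow> bool) \<Rightarrow> ('a \<Rightarrow> real) \<Rightarrow> 'a \<Rightarrow> nat \<Rightarrow> real" where
  "sig V E f v k = (\<Sum>w\<in>V. if gdist V E v w = k then f w else 0)"

lemma vstring_sig: "finite V \<Longrightarrow> vstring V E f v = map (sig V E f v) [1..<Suc (diameter V E)]"
  unfolding vstring_def sig_def by (simp add: sum.inter_filter)

lemma gdist_le_diam: "finite V \<Longrightarrow> u \<in> V \<Longrightarrow> w \<in> V \<Longrightarrow> gdist V E u w \<le> diameter V E"
  unfolding diameter_def
proof (rule Max_ge)
  assume "finite V"
  have "{gdist V E u v | u v. u \<in> V \<and> v \<in> V} = (\<lambda>(u,v). gdist V E u v) ` (V \<times> V)" by auto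
  then show "finite {gdist V E u v | u v. u \<in> V \<and> v \<in> V}" using \<open>finite V\<close> by simp
next
  assume "u \<in> V" "w \<in> V"
  then show "gdist V E u w \<in> {gdist V E u v | u v. u \<in> V \<and> v \<in> V}" by blast
qed

lemma vstring_eqD:
  assumes "finite V" "vstring V E f u = vstring V E f v" "1 \<le> k" "k \<le> diameter V E"
  shows "sig V E f u k = sig V E f v k"
proof -
  have "map (sig V E f u) [1..<Suc (diameter V E)] = map (sig V E f v) [1..<Suc (diameter V E)]"
    using assms(2) by (simp add: vstring_sig[OF assms(1)])
  then have "\<forall>x\<in>set [1..<Suc (diameter V E)]. sig V E f u x = sig V E f v x"
    by (simp only: map_eq_conv)
  then show ?thesis using assms(3,4) by (cases "k = diameter V E") auto
qed

lemma sig_big: "finite V \<Longrightarrow> u \<in> V \<Longrightarrow> diameter V E < k \<Longrightarrow> sig V E f u k = 0"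
  unfolding sig_def
proof (intro sum.neutral ballI)
  fix w assume "finite V" "u \<in> V" "diameter V E < k" "w \<in> V"
  then have "gdist V E u w \<noteq> k" using gdist_le_diam[of V u w E] by linarith
  then show "(if gdist V E u w = k then f w else 0) = 0" by simp
qed

lemma vstring_eqI:
  assumes "finite V" "u \<in> V" "v \<in> V" "\<And>k. 1 \<le> k \<Longrightarrow> sig V E f u k = sig V E f v k"
  shows "vstring V E f u = vstring V E f v"
  unfolding vstring_sig[OF assms(1)] by (rule map_cong[OF refl]) (use assms(4) in auto)

lemma vstring_eq_all:
  assumes "finite V" "u \<in> V" "v \<in> V" "vstring V E f u = vstring V E f v" "1 \<le> k"
  shows "sig V E f u k = sig V E f v k"
proof (cases "k \<le> diameter V E")
  case True then show ?thesis by (rule vstring_eqD[OF assms(1,4,5)])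
next
  case False
  then have "diameter V E < k" by simp
  then show ?thesis using sig_big[OF assms(1,2), of E k f] sig_big[OF assms(1,3), of E k f] by simp
qed

lemma sig_indicator:
  assumes "finite V" "S \<subseteq> V"
  shows "sig V E (\<lambda>w. if w \<in> S then 1 else 0) u k = (\<Sum>s\<in>S. if gdist V E u s = k then 1 else 0)"
proof -
  have "sig V E (\<lambda>w. if w \<in> S then 1 else 0) u k = (\<Sum>w\<in>V. if w \<in> S then (if gdist V E u w = k then 1 else 0) else 0)"
    unfolding sig_def by (intro sum.cong) auto
  also have "\<dots> = (\<Sum>s\<in>S. if gdist V E u s = k then 1 else 0)"
    using assms by (simp add: sum.inter_restrict[symmetric] Int_absorb1 Int_absorb2)
  finally show ?thesis .
qed


definition cnt3 :: "int \<Rightarrow> int \<Rightarrow> int \<Rightarrow> int \<Rightarrow> nat" where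
  "cnt3 a b c k = (if a = k then 1 else 0) + (if b = k then 1 else 0) + (if c = k then 1 else 0)"

definition facts3 :: "int \<Rightarrow> int \<Rightarrow> int \<Rightarrow> int \<Rightarrow> int \<Rightarrow> int \<Rightarrow> bool" where
  "facts3 a b c a' b' c' \<longleftrightarrow>
    (0<a \<longrightarrow> a=a' \<or> a=b' \<or> a=c') \<and>
    (0<b \<longrightarrow> b=a' \<or> b=b' \<or> b=c') \<and>
    (0<c \<longrightarrow> c=a' \<or> c=b' \<or> c=c') \<and>
    (0<a' \<longrightarrow> a'=a \<or> a'=b \<or> a'=c) \<and>
    (0<b' \<longrightarrow> b'=a \<or> b'=b \<or> b'=c) \<and>
    (0<c' \<longrightarrow> c'=a \<or> c'=b \<or> c'=c) \<and>
    a+b+c = a'+b'+c' \<and>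
    (if 0<a then 1 else 0) + (if 0<b then 1 else 0) + (if 0<c then 1 else (0::int)) =
    (if 0<a' then 1 else 0) + (if 0<b' then 1 else 0) + (if 0<c' then 1 else 0)"

lemma count3: "count {#a, b, c#} k = cnt3 a b c k"
  unfolding cnt3_def by auto

lemma mset_facts:
  fixes a b c a' b' c' :: int
  assumes nn: "0 \<le> a" "0 \<le> b" "0 \<le> c" "0 \<le> a'" "0 \<le> b'" "0 \<le> c'"
  and H: "\<And>k. 0 < k \<Longrightarrow> cnt3 a b c k = cnt3 a' b' c' k"
  shows "facts3 a b c a' b' c'"
proof -
  define X where "X = filter_mset ((<) 0) {#a, b, c#}"
  define X' where "X' = filter_mset ((<) 0) {#a', b', c'#}"
  have XX: "X = X'"
  proof (rule multiset_eqI)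
    fix k show "count X k = count X' k"
      unfolding X_def X'_def count_filter_mset count3 using H by simp
  qed
  have s: "sum_mset X = a + b + c" unfolding X_def using nn by auto
  have s': "sum_mset X' = a' + b' + c'" unfolding X'_def using nn by auto
  have z: "int (size X) = (if 0<a then 1 else 0) + (if 0<b then 1 else 0) + (if 0<c then 1 else (0::int))"
    unfolding X_def by auto
  have z': "int (size X') = (if 0<a' then 1 else 0) + (if 0<b' then 1 else 0) + (if 0<c' then 1 else (0::int))"
    unfolding X'_def by auto
  have m: "set_mset X = {x \<in> {a,b,c}. 0 < x}" unfolding X_def by auto
  have m': "set_mset X' = {x \<in> {a',b',c'}. 0 < x}" unfolding X'_def by auto
  have mm: "{x \<in> {a,b,c}. 0 < x} = {x \<in> {a',b',c'}. 0 < x}" using m m' XX by simp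
  show ?thesis unfolding facts3_def
    using s s' z z' XX mm by (auto simp: set_eq_iff)
qed


lemma finite_grid: "finite (grid_V m n)" unfolding grid_V_def by simp

lemma mdi_nonneg: "0 \<le> mdi u v" unfolding mdi_def by simp

lemma nat_eq_pos: "0 \<le> (x::int) \<Longrightarrow> 0 < k \<Longrightarrow> (nat x = nat k) = (x = k)" by auto

lemma three_inj:
  fixes m n :: nat
  assumes s: "s1 \<in> grid_V m n" "s2 \<in> grid_V m n" "s3 \<in> grid_V m n" "s1 \<noteq> s2" "s1 \<noteq> s3" "s2 \<noteq> s3"
  and G: "\<And>u v. u \<in> grid_V m n \<Longrightarrow> v \<in> grid_V m n \<Longrightarrow>
       facts3 (mdi u s1) (mdi u s2) (mdi u s3) (mdi v s1) (mdi v s2) (mdi v s3) \<Longrightarrow> u = v"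
  shows "inj_on (vstring (grid_V m n) grid_E (\<lambda>w. if w \<in> {s1,s2,s3} then 1 else 0)) (grid_V m n)"
proof (rule inj_onI)
  fix u v assume u: "u \<in> grid_V m n" and v: "v \<in> grid_V m n"
    and eq: "vstring (grid_V m n) grid_E (\<lambda>w. if w \<in> {s1,s2,s3} then 1 else 0) u =
             vstring (grid_V m n) grid_E (\<lambda>w. if w \<in> {s1,s2,s3} then 1 else 0) v"
  have S: "{s1,s2,s3} \<subseteq> grid_V m n" using s by auto
  have key: "real (cnt3 (mdi x s1) (mdi x s2) (mdi x s3) k) =
      sig (grid_V m n) grid_E (\<lambda>w. if w \<in> {s1,s2,s3} then 1 else 0) x (nat k)"
    if x: "x \<in> grid_V m n" and k: "0 < k" for x k
  proof -
    have "sig (grid_V m n) grid_E (\<lambda>w. if w \<in> {s1,s2,s3} then 1 else 0) x (nat k) =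
      (\<Sum>s\<in>{s1,s2,s3}. if gdist (grid_V m n) grid_E x s = nat k then 1 else 0)"
      by (rule sig_indicator[OF finite_grid S])
    also have "\<dots> = (if nat (mdi x s1) = nat k then 1 else 0) + (if nat (mdi x s2) = nat k then 1 else 0)
        + (if nat (mdi x s3) = nat k then 1 else 0)"
      using s x by (simp add: gdist_grid)
    also have "\<dots> = real (cnt3 (mdi x s1) (mdi x s2) (mdi x s3) k)"
      unfolding cnt3_def using k by (simp add: nat_eq_pos[OF mdi_nonneg])
    finally show ?thesis by simp
  qed
  have H: "cnt3 (mdi u s1) (mdi u s2) (mdi u s3) k = cnt3 (mdi v s1) (mdi v s2) (mdi v s3) k"
    if k: "0 < k" for k
  proof -
    have "sig (grid_V m n) grid_E (\<lambda>w. if w \<in> {s1,s2,s3} then 1 else 0) u (nat k) =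
          sig (grid_V m n) grid_E (\<lambda>w. if w \<in> {s1,s2,s3} then 1 else 0) v (nat k)"
      by (rule vstring_eq_all[OF finite_grid u v eq]) (use k in simp)
    then show ?thesis using key[OF u k] key[OF v k] by simp
  qed
  show "u = v"
    by (rule G[OF u v mset_facts]) (simp_all add: mdi_nonneg H)
qed


lemma pat1_arith:
  fixes i j i' j' n :: int
  assumes "4 \<le> n" "0 \<le> j" "j < n" "0 \<le> j'" "j' < n" "0 \<le> i" "0 \<le> i'"
  and "facts3 (i+j) (i + \<bar>j-1\<bar>) (i+(n-1-j)) (i'+j') (i' + \<bar>j'-1\<bar>) (i'+(n-1-j'))"
  shows "i=i' \<and> j=j'"
  using assms unfolding facts3_def by smt

lemma pat1:
  fixes m n :: nat
  assumes n: "4 \<le> n"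
  shows "inj_on (vstring (grid_V m n) grid_E (\<lambda>w. if w \<in> {(0,0),(0,1),(0,n-1)} then 1 else 0)) (grid_V m n)"
proof (cases "m = 0")
  case True then show ?thesis by (simp add: grid_V_def)
next
  case False
  show ?thesis
  proof (rule three_inj)
    show "(0,0) \<in> grid_V m n" "(0,1) \<in> grid_V m n" "(0,n-1) \<in> grid_V m n"
      "((0::nat),(0::nat)) \<noteq> (0,1)" "((0::nat),(0::nat)) \<noteq> (0,n-1)" "((0::nat),(1::nat)) \<noteq> (0,n-1)"
      using n False by (auto simp: grid_V_def)
  next
    fix u v assume u: "u \<in> grid_V m n" and v: "v \<in> grid_V m n"
      and F: "facts3 (mdi u (0,0)) (mdi u (0,1)) (mdi u (0,n-1)) (mdi v (0,0)) (mdi v (0,1)) (mdi v (0,n-1))"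
    obtain i j where uu: "u = (i,j)" by (cases u)
    obtain i' j' where vv: "v = (i',j')" by (cases v)
    have b: "j < n" "j' < n" using u v uu vv by (auto simp: grid_V_def)
    have "facts3 (int i + int j) (int i + \<bar>int j - 1\<bar>) (int i + (int n - 1 - int j))
       (int i' + int j') (int i' + \<bar>int j' - 1\<bar>) (int i' + (int n - 1 - int j'))"
      using F b n unfolding uu vv mdi_def by (simp add: of_nat_diff)
    then have "int i = int i' \<and> int j = int j'"
      by (intro pat1_arith) (use b n in auto)
    then show "u = v" using uu vv by simp
  qed
qed


lemma pat2:
  fixes m n :: nat
  assumes m: "4 \<le> m"
  shows "inj_on (vstring (grid_V m n) grid_E (\<lambda>w. if w \<in> {(0,0),(1,0),(m-1,0)} then 1 else 0)) (grid_V m n)"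
proof (cases "n = 0")
  case True then show ?thesis by (simp add: grid_V_def)
next
  case False
  show ?thesis
  proof (rule three_inj)
    show "(0,0) \<in> grid_V m n" "(1,0) \<in> grid_V m n" "(m-1,0) \<in> grid_V m n"
      "((0::nat),(0::nat)) \<noteq> (1,0)" "((0::nat),(0::nat)) \<noteq> (m-1,0)" "((1::nat),(0::nat)) \<noteq> (m-1,0)"
      using m False by (auto simp: grid_V_def)
  next
    fix u v assume u: "u \<in> grid_V m n" and v: "v \<in> grid_V m n"
      and F: "facts3 (mdi u (0,0)) (mdi u (1,0)) (mdi u (m-1,0)) (mdi v (0,0)) (mdi v (1,0)) (mdi v (m-1,0))"
    obtain i j where uu: "u = (i,j)" by (cases u)
    obtain i' j' where vv: "v = (i',j')" by (cases v)
    have b: "i < m" "i' < m" using u v uu vv by (auto simp: grid_V_def)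
    have "facts3 (int j + int i) (int j + \<bar>int i - 1\<bar>) (int j + (int m - 1 - int i))
       (int j' + int i') (int j' + \<bar>int i' - 1\<bar>) (int j' + (int m - 1 - int i'))"
      using F b m unfolding uu vv mdi_def by (simp add: of_nat_diff ac_simps)
    then have "int j = int j' \<and> int i = int i'"
      by (intro pat1_arith) (use b m in auto)
    then show "u = v" using uu vv by simp
  qed
qed

lemma small_inj:
  fixes m n :: nat and s1 s2 s3 :: "nat \<times> nat"
  assumes s: "s1 \<in> grid_V m n" "s2 \<in> grid_V m n" "s3 \<in> grid_V m n" "s1 \<noteq> s2" "s1 \<noteq> s3" "s2 \<noteq> s3"
  and G: "\<And>i j i' j'. i < m \<Longrightarrow> j < n \<Longrightarrow> i' < m \<Longrightarrow> j' < n \<Longrightarrow>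
     facts3 (mdi (i,j) s1) (mdi (i,j) s2) (mdi (i,j) s3) (mdi (i',j') s1) (mdi (i',j') s2) (mdi (i',j') s3) \<Longrightarrow> i = i' \<and> j = j'"
  shows "inj_on (vstring (grid_V m n) grid_E (\<lambda>w. if w \<in> {s1,s2,s3} then 1 else 0)) (grid_V m n)"
proof (rule three_inj[OF s])
  fix u v assume "u \<in> grid_V m n" "v \<in> grid_V m n"
    "facts3 (mdi u s1) (mdi u s2) (mdi u s3) (mdi v s1) (mdi v s2) (mdi v s3)"
  then show "u = v" using G by (cases u; cases v) (auto simp: grid_V_def)
qed

lemma inj23: "inj_on (vstring (grid_V 2 3) grid_E (\<lambda>w. if w \<in> {(0,0),(0,2),(1,0)} then 1 else 0)) (grid_V 2 3)"
proof (rule small_inj)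
  fix i j i' j' :: nat
  assume "i < 2" "j < 3" "i' < 2" "j' < 3"
    "facts3 (mdi (i,j) (0,0)) (mdi (i,j) (0,2)) (mdi (i,j) (1,0)) (mdi (i',j') (0,0)) (mdi (i',j') (0,2)) (mdi (i',j') (1,0))"
  then show "i = i' \<and> j = j'" unfolding mdi_def facts3_def
    by (simp add: less_Suc_eq numeral_eq_Suc; elim disjE; simp)
qed (auto simp: grid_V_def)

lemma inj32: "inj_on (vstring (grid_V 3 2) grid_E (\<lambda>w. if w \<in> {(0,0),(2,0),(0,1)} then 1 else 0)) (grid_V 3 2)"
proof (rule small_inj)
  fix i j i' j' :: nat
  assume "i < 3" "j < 2" "i' < 3" "j' < 2"
    "facts3 (mdi (i,j) (0,0)) (mdi (i,j) (2,0)) (mdi (i,j) (0,1)) (mdi (i',j') (0,0)) (mdi (i',j') (2,0)) (mdi (i',j') (0,1))"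
  then show "i = i' \<and> j = j'" unfolding mdi_def facts3_def
    by (simp add: less_Suc_eq numeral_eq_Suc; elim disjE; simp)
qed (auto simp: grid_V_def)

lemma inj33: "inj_on (vstring (grid_V 3 3) grid_E (\<lambda>w. if w \<in> {(0,0),(0,1),(2,0)} then 1 else 0)) (grid_V 3 3)"
proof (rule small_inj)
  fix i j i' j' :: nat
  assume "i < 3" "j < 3" "i' < 3" "j' < 3"
    "facts3 (mdi (i,j) (0,0)) (mdi (i,j) (0,1)) (mdi (i,j) (2,0)) (mdi (i',j') (0,0)) (mdi (i',j') (0,1)) (mdi (i',j') (2,0))"
  then show "i = i' \<and> j = j'" unfolding mdi_def facts3_def
    by (simp add: less_Suc_eq numeral_eq_Suc; elim disjE; simp)
qed (auto simp: grid_V_def)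


lemma card_ind:
  assumes "S \<subseteq> V" "s \<in> S" "w \<in> V" "w \<notin> S"
  shows "card ((\<lambda>w. if w \<in> S then 1 else (0::real)) ` V) = 2"
proof -
  have "(\<lambda>w. if w \<in> S then 1 else (0::real)) ` V = {0,1}"
    using assms by (auto simp: image_iff split: if_splits)
  then show ?thesis by simp
qed

lemma lower1:
  fixes m n :: nat and f :: "nat \<times> nat \<Rightarrow> real"
  assumes m: "2 \<le> m" and n: "1 \<le> n" and c: "card (f ` grid_V m n) \<le> 1"
  shows "\<not> inj_on (vstring (grid_V m n) grid_E f) (grid_V m n)"
proof
  assume inj: "inj_on (vstring (grid_V m n) grid_E f) (grid_V m n)"
  have p0: "(0,0) \<in> grid_V m n" and p1: "(m-1,0) \<in> grid_V m n" using m n by (auto simp: grid_V_def)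
  have fin: "finite (f ` grid_V m n)" by (simp add: finite_grid)
  have ne: "f ` grid_V m n \<noteq> {}" using p0 by auto
  have "card (f ` grid_V m n) = 1" using c fin ne by (simp add: le_Suc_eq card_0_eq)
  then obtain cc where cc: "f ` grid_V m n = {cc}" by (auto simp: card_Suc_eq)
  have fc: "\<And>w. w \<in> grid_V m n \<Longrightarrow> f w = cc" using cc by auto
  define r where "r = (\<lambda>(a::nat,b::nat). (m - 1 - a, b))"
  have rV: "\<And>w. w \<in> grid_V m n \<Longrightarrow> r w \<in> grid_V m n" unfolding r_def grid_V_def by auto
  have rr: "\<And>w. w \<in> grid_V m n \<Longrightarrow> r (r w) = w" unfolding r_def grid_V_def by auto
  have gd: "\<And>w. w \<in> grid_V m n \<Longrightarrow> gdist (grid_V m n) grid_E (m-1,0) (r w) = gdist (grid_V m n) grid_E (0,0) w"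
  proof -
    fix w assume w: "w \<in> grid_V m n"
    then show "gdist (grid_V m n) grid_E (m-1,0) (r w) = gdist (grid_V m n) grid_E (0,0) w"
    proof -
      have "mdi (m-1,0) (r w) = mdi (0,0) w" using w m
        by (cases w) (auto simp: r_def mdi_def grid_V_def of_nat_diff)
      then show ?thesis by (subst gdist_grid[OF p1 rV[OF w]], subst gdist_grid[OF p0 w]) simp
    qed
  qed
  have "vstring (grid_V m n) grid_E f (0,0) = vstring (grid_V m n) grid_E f (m-1,0)"
  proof (rule vstring_eqI[OF finite_grid p0 p1])
    fix k :: nat
    show "sig (grid_V m n) grid_E f (0,0) k = sig (grid_V m n) grid_E f (m-1,0) k"
      unfolding sig_def
    proof (rule sum.reindex_bij_witness[where i = r and j = r])
      fix a assume a: "a \<in> grid_V m n"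
      show "r (r a) = a" by (rule rr[OF a])
      show "r a \<in> grid_V m n" by (rule rV[OF a])
      show "(if gdist (grid_V m n) grid_E (m - 1, 0) (r a) = k then f (r a) else 0) =
            (if gdist (grid_V m n) grid_E (0, 0) a = k then f a else 0)"
        using gd[OF a] fc[OF a] fc[OF rV[OF a]] by simp
    qed (auto simp: rr rV)
  qed
  moreover have "(0::nat,0::nat) \<noteq> (m-1,0)" using m by simp
  ultimately show False using inj p0 p1 by (meson inj_onD)
qed


lemma V22: "grid_V 2 2 = {(0,0),(0,1),(1,0),(1,1)}"
  unfolding grid_V_def by (auto simp: less_Suc_eq numeral_eq_Suc)

lemma sig22:
  assumes "v \<in> grid_V 2 2"
  shows "sig (grid_V 2 2) grid_E f v k =
    (\<Sum>w\<in>{(0,0),(0,1),(1,0),(1,1)}. if nat (mdi v w) = k then f w else 0)"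
proof -
  have "sig (grid_V 2 2) grid_E f v k = (\<Sum>w\<in>grid_V 2 2. if nat (mdi v w) = k then f w else 0)"
    unfolding sig_def by (rule sum.cong[OF refl]) (simp add: gdist_grid[OF assms])
  then show ?thesis by (simp add: V22)
qed

lemma s00: "sig (grid_V 2 2) grid_E f (0,0) k =
   (if k = 0 then f (0,0) else 0) + (if k = 1 then f (0,1) + f (1,0) else 0) + (if k = 2 then f (1,1) else 0)"
  by (subst sig22) (auto simp: V22 mdi_def)
lemma s01: "sig (grid_V 2 2) grid_E f (0,1) k =
   (if k = 0 then f (0,1) else 0) + (if k = 1 then f (0,0) + f (1,1) else 0) + (if k = 2 then f (1,0) else 0)"
  by (subst sig22) (auto simp: V22 mdi_def)
lemma s10: "sig (grid_V 2 2) grid_E f (1,0) k =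
   (if k = 0 then f (1,0) else 0) + (if k = 1 then f (0,0) + f (1,1) else 0) + (if k = 2 then f (0,1) else 0)"
  by (subst sig22) (auto simp: V22 mdi_def)
lemma s11: "sig (grid_V 2 2) grid_E f (1,1) k =
   (if k = 0 then f (1,1) else 0) + (if k = 1 then f (0,1) + f (1,0) else 0) + (if k = 2 then f (0,0) else 0)"
  by (subst sig22) (auto simp: V22 mdi_def)

lemmas sall = s00 s01 s10 s11 s00[unfolded One_nat_def] s01[unfolded One_nat_def]
  s10[unfolded One_nat_def] s11[unfolded One_nat_def]

lemma eq22:
  assumes "u \<in> grid_V 2 2" "v \<in> grid_V 2 2"
    "sig (grid_V 2 2) grid_E f u 1 = sig (grid_V 2 2) grid_E f v 1"
    "sig (grid_V 2 2) grid_E f u 2 = sig (grid_V 2 2) grid_E f v 2"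
  shows "vstring (grid_V 2 2) grid_E f u = vstring (grid_V 2 2) grid_E f v"
proof (rule vstring_eqI[OF finite_grid assms(1,2)])
  fix k :: nat assume k: "1 \<le> k"
  have "u \<in> {(0,0),(0,1),(1,0),(1,1)}" "v \<in> {(0,0),(0,1),(1,0),(1,1)}" using assms(1,2) V22 by auto
  then show "sig (grid_V 2 2) grid_E f u k = sig (grid_V 2 2) grid_E f v k"
    using assms(3,4) k by (auto simp: sall s10 s11)
qed

lemma lower22:
  fixes f :: "nat \<times> nat \<Rightarrow> real"
  assumes c: "card (f ` grid_V 2 2) \<le> 2"
  shows "\<not> inj_on (vstring (grid_V 2 2) grid_E f) (grid_V 2 2)"
proof
  assume inj: "inj_on (vstring (grid_V 2 2) grid_E f) (grid_V 2 2)"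
  define a where "a = f (0,0)"
  define b where "b = f (0,1)"
  define c where "c = f (1,1)"
  define d where "d = f (1,0)"
  have P: "(0,0) \<in> grid_V 2 2" "(0,1) \<in> grid_V 2 2" "(1,0) \<in> grid_V 2 2" "(1,1) \<in> grid_V 2 2"
    by (auto simp: V22)
  have noteq: "vstring (grid_V 2 2) grid_E f u \<noteq> vstring (grid_V 2 2) grid_E f v"
    if "u \<in> grid_V 2 2" "v \<in> grid_V 2 2" "u \<noteq> v" for u v
    using inj that by (meson inj_onD)
  have ac: "a \<noteq> c"
  proof
    assume "a = c"
    then have "vstring (grid_V 2 2) grid_E f (0,0) = vstring (grid_V 2 2) grid_E f (1,1)"
      by (intro eq22 P) (simp_all add: sall a_def c_def)
    then show False using noteq[OF P(1) P(4)] by simp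
  qed
  have bd: "b \<noteq> d"
  proof
    assume "b = d"
    then have "vstring (grid_V 2 2) grid_E f (0,1) = vstring (grid_V 2 2) grid_E f (1,0)"
      by (intro eq22 P) (simp_all add: sall b_def d_def)
    then show False using noteq[OF P(2) P(3)] by simp
  qed
  have img: "f ` grid_V 2 2 = {a,b,c,d}" unfolding a_def b_def c_def d_def V22 by auto
  have b_in: "b \<in> {a,c}"
  proof (rule ccontr)
    assume "b \<notin> {a,c}"
    then have "card {a,b,c} = 3" using ac by auto
    moreover have "card {a,b,c} \<le> card {a,b,c,d}" by (rule card_mono) auto
    ultimately show False using c img by simp
  qed
  have d_in: "d \<in> {a,c}"
  proof (rule ccontr)
    assume "d \<notin> {a,c}"
    then have "card {a,d,c} = 3" using ac by auto
    moreover have "card {a,d,c} \<le> card {a,b,c,d}" by (rule card_mono) auto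
    ultimately show False using c img by simp
  qed
  show False
  proof (cases "b = a")
    case True
    then have "d = c" using d_in bd by auto
    then have "vstring (grid_V 2 2) grid_E f (0,0) = vstring (grid_V 2 2) grid_E f (0,1)"
      using True by (intro eq22 P) (simp_all add: sall a_def b_def c_def d_def add.commute)
    then show False using noteq[OF P(1) P(2)] by simp
  next
    case False
    then have "b = c" "d = a" using b_in d_in bd by auto
    then have "vstring (grid_V 2 2) grid_E f (0,0) = vstring (grid_V 2 2) grid_E f (1,0)"
      by (intro eq22 P) (simp_all add: sall a_def b_def c_def d_def add.commute)
    then show False using noteq[OF P(1) P(3)] by simp
  qed
qed

definition f22 :: "nat \<times> nat \<Rightarrow> real" where
  "f22 w = (if w = (1,1) then 1 else if w = (1,0) then 2 else 0)"

lemma upper22: "card (f22 ` grid_V 2 2) = 3 \<and> inj_on (vstring (grid_V 2 2) grid_E f22) (grid_V 2 2)"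
proof
  show "card (f22 ` grid_V 2 2) = 3" by (simp add: V22 f22_def)
next
  have P: "(0,0) \<in> grid_V 2 2" "(1,1) \<in> grid_V 2 2" by (auto simp: V22)
  have D: "2 \<le> diameter (grid_V 2 2) grid_E"
  proof -
    have "gdist (grid_V 2 2) grid_E (0,0) (1,1) = 2" by (subst gdist_grid[OF P]) (simp add: mdi_def)
    then show ?thesis using gdist_le_diam[OF finite_grid P, of grid_E] by simp
  qed
  show "inj_on (vstring (grid_V 2 2) grid_E f22) (grid_V 2 2)"
  proof (rule inj_onI)
    fix u v assume u: "u \<in> grid_V 2 2" and v: "v \<in> grid_V 2 2"
      and e: "vstring (grid_V 2 2) grid_E f22 u = vstring (grid_V 2 2) grid_E f22 v"
    have e1: "sig (grid_V 2 2) grid_E f22 u 1 = sig (grid_V 2 2) grid_E f22 v 1"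
      by (rule vstring_eqD[OF finite_grid e]) (use D in auto)
    have e2: "sig (grid_V 2 2) grid_E f22 u 2 = sig (grid_V 2 2) grid_E f22 v 2"
      by (rule vstring_eqD[OF finite_grid e]) (use D in auto)
    have "u \<in> {(0,0),(0,1),(1,0),(1,1)}" "v \<in> {(0,0),(0,1),(1,0),(1,1)}" using u v V22 by auto
    then show "u = v" using e1 e2 by (auto simp: sall s10 s11 f22_def)
  qed
qed


lemma exists2:
  fixes m n :: nat
  assumes m: "2 \<le> m" and n: "2 \<le> n" and nt: "\<not> (m = 2 \<and> n = 2)"
  shows "\<exists>f :: nat \<times> nat \<Rightarrow> real. card (f ` grid_V m n) = 2 \<and> inj_on (vstring (grid_V m n) grid_E f) (grid_V m n)"
proof -
  have w: "(1,1) \<in> grid_V m n" using m n by (auto simp: grid_V_def)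
  consider "4 \<le> n" | "4 \<le> m" | "m = 2 \<and> n = 3" | "m = 3 \<and> n = 2" | "m = 3 \<and> n = 3"
    using m n nt by linarith
  then show ?thesis
  proof cases
    case 1
    have S: "{(0,0),(0,1),(0,n-1)} \<subseteq> grid_V m n" using m 1 by (auto simp: grid_V_def)
    have "(1,1) \<notin> {(0::nat,0::nat),(0,1),(0,n-1)}" by auto
    then show ?thesis using card_ind[OF S _ w] pat1[OF 1] by blast
  next
    case 2
    have S: "{(0,0),(1,0),(m-1,0)} \<subseteq> grid_V m n" using n 2 by (auto simp: grid_V_def)
    have "(1,1) \<notin> {(0::nat,0::nat),(1,0),(m-1,0)}" by auto
    then show ?thesis using card_ind[OF S _ w] pat2[OF 2] by blast
  next
    case 3
    have S: "{(0,0),(0,2),(1,0)} \<subseteq> grid_V m n" using 3 by (auto simp: grid_V_def)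
    have "(1,1) \<notin> {(0::nat,0::nat),(0,2),(1,0)}" by auto
    then show ?thesis using card_ind[OF S _ w] inj23 3 by blast
  next
    case 4
    have S: "{(0,0),(2,0),(0,1)} \<subseteq> grid_V m n" using 4 by (auto simp: grid_V_def)
    have "(1,1) \<notin> {(0::nat,0::nat),(2,0),(0,1)}" by auto
    then show ?thesis using card_ind[OF S _ w] inj32 4 by blast
  next
    case 5
    have S: "{(0,0),(0,1),(2,0)} \<subseteq> grid_V m n" using 5 by (auto simp: grid_V_def)
    have "(1,1) \<notin> {(0::nat,0::nat),(0,1),(2,0)}" by auto
    then show ?thesis using card_ind[OF S _ w] inj33 5 by blast
  qed
qed

theorem mainTheorem8:
  fixes m n :: nat
  assumes "m \<ge> 2" and "n \<ge> 2"
  shows "IDI (grid_V m n) grid_E = (if m = 2 \<and> n = 2 then 3 else 2)"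
proof (cases "m = 2 \<and> n = 2")
  case True
  then have mn: "m = 2" "n = 2" by auto
  have "IDI (grid_V 2 2) grid_E = 3"
    unfolding IDI_def
  proof (rule Least_equality)
    show "\<exists>f :: nat \<times> nat \<Rightarrow> real. card (f ` grid_V 2 2) = 3 \<and> inj_on (vstring (grid_V 2 2) grid_E f) (grid_V 2 2)"
      using upper22 by blast
  next
    fix k assume "\<exists>f :: nat \<times> nat \<Rightarrow> real. card (f ` grid_V 2 2) = k \<and> inj_on (vstring (grid_V 2 2) grid_E f) (grid_V 2 2)"
    then obtain f :: "nat \<times> nat \<Rightarrow> real" where "card (f ` grid_V 2 2) = k" "inj_on (vstring (grid_V 2 2) grid_E f) (grid_V 2 2)" by blast
    then show "3 \<le> k" using lower22[of f] by linarith
  qed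
  then show ?thesis using mn by simp
next
  case False
  have "IDI (grid_V m n) grid_E = 2"
    unfolding IDI_def
  proof (rule Least_equality)
    show "\<exists>f :: nat \<times> nat \<Rightarrow> real. card (f ` grid_V m n) = 2 \<and> inj_on (vstring (grid_V m n) grid_E f) (grid_V m n)"
      using exists2[OF assms False] .
  next
    fix k assume "\<exists>f :: nat \<times> nat \<Rightarrow> real. card (f ` grid_V m n) = k \<and> inj_on (vstring (grid_V m n) grid_E f) (grid_V m n)"
    then obtain f :: "nat \<times> nat \<Rightarrow> real" where "card (f ` grid_V m n) = k" "inj_on (vstring (grid_V m n) grid_E f) (grid_V m n)" by blast
    then show "2 \<le> k" using lower1[of m n f] assms by linarith
  qed
  then show ?thesis using False by simp
qed

end
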